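(* Let $h:B_4\to B_3$ be the homomorphism with $h(\sigma_1)=\sigma_1$, $h(\sigma_2)=\sigma_2$, $h(\sigma_3)=\sigma_1$. Then $\ker h$ is densely ordered by the restriction of the Dehornoy ordering of $B_4$.
   Context: $B_n$ is the Artin braid group with generators $\sigma_1,\dots,\sigma_{n-1}$. A word in the generators is $i$-positive if it contains only $\sigma_1,\dots,\sigma_i$ and their inverses, $\sigma_i$ occurs, and every occurrence of $\sigma_i$ has positive exponent; a braid is $i$-positive if some representative word is. The Dehornoy ordering is the left-invariant total order on $B_n$ whose positive cone consists of all braids that are $i$-positive for some $i$. A subgroup is densely ordered if it has no least positive element (equivalently, between any two of its elements lies a third). *)

theory Defs
  imports Main
begin

text \<open>Braid words: a letter (i, True) is sigma_i, (i, False) is sigma_i inverse.\<close>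
type_synonym letter = "nat \<times> bool"
type_synonym word = "letter list"

definition gens :: "nat \<Rightarrow> word \<Rightarrow> bool" where
  "gens n w \<longleftrightarrow> (\<forall>(i, b) \<in> set w. 1 \<le> i \<and> i < n)"

definition inv_word :: "word \<Rightarrow> word" where
  "inv_word w = rev (map (\<lambda>(i, b). (i, \<not> b)) w)"

inductive braid_rel :: "nat \<Rightarrow> word \<Rightarrow> word \<Rightarrow> bool" for n :: nat where
  cancel: "1 \<le> i \<Longrightarrow> i < n \<Longrightarrow> braid_rel n [(i, b), (i, \<not> b)] []"
| comm: "1 \<le> i \<Longrightarrow> i < n \<Longrightarrow> 1 \<le> j \<Longrightarrow> j < n \<Longrightarrow> i + 2 \<le> j \<or> j + 2 \<le> i \<Longrightarrow>
    braid_rel n [(i, True), (j, True)] [(j, True), (i, True)]"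
| braid: "1 \<le> i \<Longrightarrow> i < n \<Longrightarrow> 1 \<le> j \<Longrightarrow> j < n \<Longrightarrow> j = i + 1 \<or> i = j + 1 \<Longrightarrow>
    braid_rel n [(i, True), (j, True), (i, True)] [(j, True), (i, True), (j, True)]"

inductive braid_eq :: "nat \<Rightarrow> word \<Rightarrow> word \<Rightarrow> bool" for n :: nat where
  refl: "gens n w \<Longrightarrow> braid_eq n w w"
| sym: "braid_eq n u v \<Longrightarrow> braid_eq n v u"
| trans: "braid_eq n u v \<Longrightarrow> braid_eq n v w \<Longrightarrow> braid_eq n u w"
| ctx: "braid_rel n v v' \<Longrightarrow> gens n u \<Longrightarrow> gens n x \<Longrightarrow> braid_eq n (u @ v @ x) (u @ v' @ x)"

definition i_positive :: "nat \<Rightarrow> word \<Rightarrow> bool" where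
  "i_positive i w \<longleftrightarrow> (\<forall>(j, b) \<in> set w. 1 \<le> j \<and> j \<le> i) \<and> (i, True) \<in> set w \<and> (i, False) \<notin> set w"

definition dehornoy_pos :: "nat \<Rightarrow> word \<Rightarrow> bool" where
  "dehornoy_pos n w \<longleftrightarrow> gens n w \<and> (\<exists>i w'. braid_eq n w w' \<and> i_positive i w')"

definition dh_less :: "nat \<Rightarrow> word \<Rightarrow> word \<Rightarrow> bool" where
  "dh_less n u v \<longleftrightarrow> dehornoy_pos n (inv_word u @ v)"

definition dh_le :: "nat \<Rightarrow> word \<Rightarrow> word \<Rightarrow> bool" where
  "dh_le n u v \<longleftrightarrow> braid_eq n u v \<or> dh_less n u v"

text \<open>A subgroup H (given as a set of words closed under braid_eq) is densely ordered
  if it has no least positive element.\<close>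
definition densely_ordered :: "nat \<Rightarrow> word set \<Rightarrow> bool" where
  "densely_ordered n H \<longleftrightarrow>
     \<not> (\<exists>p\<in>H. dh_less n [] p \<and> (\<forall>q\<in>H. dh_less n [] q \<longrightarrow> dh_le n p q))"

definition h_word :: "word \<Rightarrow> word" where
  "h_word w = map (\<lambda>(i, b). (if i = 3 then 1 else i, b)) w"

definition ker_h :: "word set" where
  "ker_h = {w. gens 4 w \<and> braid_eq 3 (h_word w) []}"

end

theory Submission
  imports Defs
begin


type_synonym fl = "nat \<times> bool"

fun ninv :: "fl \<Rightarrow> fl" where "ninv (k,s) = (k, \<not>s)"

lemma ninv_ninv[simp]: "ninv (ninv x) = x" by (cases x) auto
lemma ninv_eq_iff: "(ninv x = y) = (x = ninv y)" by (cases x; cases y) auto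
lemma ninv_neq[simp]: "ninv x \<noteq> x" "x \<noteq> ninv x" by (cases x, auto)+

definition finv :: "fl list \<Rightarrow> fl list" where "finv u = rev (map ninv u)"

lemma finv_simps[simp]: "finv [] = []" "finv (x#u) = finv u @ [ninv x]"
  "finv (u@v) = finv v @ finv u" "finv (finv u) = u"
  by (auto simp: finv_def rev_map[symmetric] comp_def)

definition rstep :: "fl list \<Rightarrow> fl \<Rightarrow> fl list" where
  "rstep X x = (if X \<noteq> [] \<and> last X = ninv x then butlast X else X @ [x])"

definition red :: "fl list \<Rightarrow> fl list" where "red w = foldl rstep [] w"

fun reduced :: "fl list \<Rightarrow> bool" where
  "reduced [] = True" | "reduced [x] = True"
| "reduced (x#y#r) = (y \<noteq> ninv x \<and> reduced (y#r))"

lemma reduced_snoc: "reduced (X @ [x]) \<longleftrightarrow> reduced X \<and> (X \<noteq> [] \<longrightarrow> x \<noteq> ninv (last X))"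
  by (induction X rule: reduced.induct) auto

lemma reduced_append: "reduced (X @ Y) \<longleftrightarrow> reduced X \<and> reduced Y \<and> (X \<noteq> [] \<longrightarrow> Y \<noteq> [] \<longrightarrow> hd Y \<noteq> ninv (last X))"
proof (induction Y rule: rev_induct)
  case Nil then show ?case by simp
next
  case (snoc y Y)
  then show ?case
    by (cases "Y = []") (auto simp: reduced_snoc simp flip: append_assoc)
qed

lemma reduced_butlast: "reduced X \<Longrightarrow> reduced (butlast X)"
  by (cases X rule: rev_cases) (auto simp: reduced_snoc)

lemma reduced_rstep: "reduced X \<Longrightarrow> reduced (rstep X x)"
  by (auto simp: rstep_def reduced_butlast reduced_snoc ninv_eq_iff)

lemma reduced_foldl: "reduced X \<Longrightarrow> reduced (foldl rstep X u)"
  by (induction u arbitrary: X) (auto simp: reduced_rstep)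

lemma reduced_red[simp]: "reduced (red w)"
  unfolding red_def by (rule reduced_foldl) simp

lemma red_snoc: "red (w @ [x]) = rstep (red w) x"
  by (simp add: red_def)

lemma red_reduced: "reduced X \<Longrightarrow> red X = X"
proof (induction X rule: rev_induct)
  case (snoc x X)
  then show ?case
    by (auto simp: red_snoc rstep_def reduced_snoc ninv_eq_iff)
qed (simp add: red_def)

lemma red_Nil[simp]: "red [] = []" by (simp add: red_def)

lemma rstep_cancel: "reduced X \<Longrightarrow> rstep (rstep X x) (ninv x) = X"
proof -
  assume r: "reduced X"
  show ?thesis
  proof (cases "X \<noteq> [] \<and> last X = ninv x")
    case True
    then obtain Y where Y: "X = Y @ [ninv x]" by (metis append_butlast_last_id)
    with r have "Y \<noteq> [] \<longrightarrow> last Y \<noteq> x" by (auto simp: reduced_snoc ninv_eq_iff)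
    then show ?thesis using Y by (auto simp: rstep_def)
  qed (auto simp: rstep_def)
qed

lemma red_cancel: "red (u @ x # ninv x # v) = red (u @ v)"
proof -
  have "red (u @ x # ninv x # v) = foldl rstep (rstep (rstep (red u) x) (ninv x)) v"
    by (simp add: red_def)
  also have "\<dots> = foldl rstep (red u) v" by (simp add: rstep_cancel)
  finally show ?thesis by (simp add: red_def)
qed

lemma red_cancel': "red (u @ ninv x # x # v) = red (u @ v)"
  using red_cancel[of u "ninv x" v] by simp

lemma red_mid: "red (u @ red v @ w) = red (u @ v @ w)"
proof (induction v arbitrary: w rule: rev_induct)
  case Nil then show ?case by simp
next
  case (snoc y v)
  show ?case
  proof (cases "red v \<noteq> [] \<and> last (red v) = ninv y")
    case True
    then obtain B where B: "red v = B @ [ninv y]" by (metis append_butlast_last_id)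
    have "red (v @ [y]) = B" using True B by (simp add: red_snoc rstep_def)
    then have "red (u @ red (v @ [y]) @ w) = red (u @ B @ w)" by simp
    also have "\<dots> = red ((u @ B) @ ninv y # ninv (ninv y) # w)" by (simp only: red_cancel) simp
    also have "\<dots> = red (u @ red v @ y # w)" using B by simp
    also have "\<dots> = red (u @ v @ y # w)" by (rule snoc.IH)
    finally show ?thesis by simp
  next
    case False
    then have "red (v @ [y]) = red v @ [y]" by (auto simp: red_snoc rstep_def)
    then show ?thesis using snoc.IH[of "y # w"] by simp
  qed
qed

lemma red_red[simp]: "red (red v) = red v"
  using red_mid[of "[]" v "[]"] by simp

lemma red_left: "red (red u @ v) = red (u @ v)"
  using red_mid[of "[]" u v] by simp

lemma red_right: "red (u @ red v) = red (u @ v)"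
  using red_mid[of u v "[]"] by simp

lemma red_both: "red (red u @ red v) = red (u @ v)"
  by (simp add: red_left red_right)

lemma red_inv_cancel: "red (A @ F @ finv F @ B) = red (A @ B)"
proof (induction F arbitrary: A B)
  case (Cons y F)
  have "red (A @ (y # F) @ finv (y # F) @ B) = red ((A @ [y]) @ F @ finv F @ (ninv y # B))" by simp
  also have "\<dots> = red ((A @ [y]) @ ninv y # B)" by (rule Cons.IH)
  also have "\<dots> = red (A @ B)" using red_cancel[of A y B] by simp
  finally show ?case .
qed simp

lemma red_inv_cancel': "red (A @ finv F @ F @ B) = red (A @ B)"
  using red_inv_cancel[of A "finv F" B] by simp

definition sub :: "(nat \<Rightarrow> fl list) \<Rightarrow> fl list \<Rightarrow> fl list" where
  "sub f w = concat (map (\<lambda>(k,s). if s then f k else finv (f k)) w)"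

lemma sub_simps[simp]: "sub f [] = []" "sub f (x # w) = (if snd x then f (fst x) else finv (f (fst x))) @ sub f w"
  "sub f (u @ v) = sub f u @ sub f v"
  by (auto simp: sub_def split: prod.split)

lemma sub_finv: "sub f (finv u) = finv (sub f u)"
  by (induction u) auto

lemma sub_sub: "sub g (sub f w) = sub (\<lambda>k. sub g (f k)) w"
  by (induction w) (auto simp: sub_finv)

lemma sub_id: "sub (\<lambda>k. [(k,True)]) w = w"
  by (induction w) auto

lemma red_sub_red: "red (sub f (red w)) = red (sub f w)"
proof (induction w rule: rev_induct)
  case (snoc y w)
  show ?case
  proof (cases "red w \<noteq> [] \<and> last (red w) = ninv y")
    case True
    then obtain B where B: "red w = B @ [ninv y]" by (metis append_butlast_last_id)
    have e: "red (w @ [y]) = B" using True B by (simp add: red_snoc rstep_def)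
    have "red (sub f (w @ [y])) = red (red (sub f w) @ sub f [y])" by (simp add: red_left)
    also have "\<dots> = red (red (sub f (red w)) @ sub f [y])" by (simp add: snoc.IH)
    also have "\<dots> = red (sub f B @ sub f [ninv y] @ sub f [y])" by (simp add: red_left B)
    also have "\<dots> = red (sub f B)"
    proof -
      have "sub f [y] = finv (sub f [ninv y])" using sub_finv[of f "[ninv y]"] by simp
      then show ?thesis using red_inv_cancel[of "sub f B" "sub f [ninv y]" "[]"] by simp
    qed
    finally show ?thesis using e by simp
  next
    case False
    then have "red (w @ [y]) = red w @ [y]" by (auto simp: red_snoc rstep_def)
    then have "red (sub f (red (w @ [y]))) = red (red (sub f (red w)) @ sub f [y])" by (simp add: red_left)
    also have "\<dots> = red (sub f (w @ [y]))" by (simp add: snoc.IH red_left)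
    finally show ?thesis .
  qed
qed simp

lemma red_finv_cong: "red F = red G \<Longrightarrow> red (finv F) = red (finv G)"
proof -
  assume e: "red F = red G"
  have "red (finv F) = red (finv F @ G @ finv G @ [])" using red_inv_cancel[of "finv F" G "[]"] by simp
  also have "\<dots> = red (finv F @ red G @ finv G)" by (simp add: red_mid)
  also have "\<dots> = red (finv F @ F @ finv G)" by (simp add: red_mid flip: e)
  also have "\<dots> = red (finv G)" using red_inv_cancel'[of "[]" F "finv G"] by simp
  finally show ?thesis .
qed

lemma red_sub_cong: "(\<And>k. red (F k) = red (G k)) \<Longrightarrow> red (sub F w) = red (sub G w)"
proof (induction w)
  case (Cons x w)
  have "red (sub F (x # w)) = red (red (if snd x then F (fst x) else finv (F (fst x))) @ red (sub F w))"
    by (simp add: red_both)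
  also have "\<dots> = red (red (if snd x then G (fst x) else finv (G (fst x))) @ red (sub G w))"
  proof (cases "snd x")
    case False
    then show ?thesis using Cons red_finv_cong[of "F (fst x)" "G (fst x)"] by simp
  qed (use Cons in simp)
  also have "\<dots> = red (sub G (x # w))" by (simp add: red_both)
  finally show ?case .
qed simp

definition Fp :: "nat \<Rightarrow> nat \<Rightarrow> fl list" where
  "Fp j k = (if k = j then [(Suc j, True)] else if k = Suc j then [(Suc j,True),(j,True),(Suc j,False)] else [(k,True)])"
definition Fm :: "nat \<Rightarrow> nat \<Rightarrow> fl list" where
  "Fm j k = (if k = j then [(j,False),(Suc j,True),(j,True)] else if k = Suc j then [(j,True)] else [(k,True)])"
definition lf :: "letter \<Rightarrow> nat \<Rightarrow> fl list" where "lf l = (if snd l then Fp (fst l) else Fm (fst l))"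

definition act :: "word \<Rightarrow> fl list \<Rightarrow> fl list" where
  "act w X = foldl (\<lambda>Y l. red (sub (lf l) Y)) (red X) w"

fun Hw :: "word \<Rightarrow> nat \<Rightarrow> fl list" where
  "Hw [] = (\<lambda>k. [(k,True)])"
| "Hw (l # w) = (\<lambda>k. sub (Hw w) (lf l k))"

lemma act_Nil[simp]: "act [] X = red X" by (simp add: act_def)

lemma act_Cons: "act (l # w) X = act w (red (sub (lf l) X))"
  by (simp add: act_def red_sub_red)

lemma act_H: "act w X = red (sub (Hw w) X)"
proof (induction w arbitrary: X)
  case Nil then show ?case by (simp add: sub_id)
next
  case (Cons l w)
  have "act (l # w) X = red (sub (Hw w) (red (sub (lf l) X)))" by (simp add: act_Cons Cons.IH)
  also have "\<dots> = red (sub (Hw (l # w)) X)" by (simp add: red_sub_red sub_sub)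
  finally show ?case .
qed

lemma Hw_append: "Hw (u @ v) = (\<lambda>k. sub (Hw v) (Hw u k))"
  by (induction u) (simp_all add: sub_id sub_sub)

lemma act_append: "act (u @ v) X = act v (act u X)"
  unfolding act_H by (simp only: red_sub_red sub_sub Hw_append)

lemma act_cong: "(\<And>k. red (Hw v k) = red (Hw v' k)) \<Longrightarrow> act v X = act v' X"
  unfolding act_H by (rule red_sub_cong)



lemma Hw_eval: "Hw [l] = lf l" "Hw (l # w) = (\<lambda>k. sub (Hw w) (lf l k))"
  by (auto simp: sub_id)

lemma rel_cancel: "red (Hw [(i,b),(i,\<not>b)] k) = red (Hw [] k)"
  by (cases b) (auto simp: Fp_def Fm_def lf_def red_def rstep_def sub_id)

lemma rel_comm: "i + 2 \<le> j \<or> j + 2 \<le> i \<Longrightarrow> red (Hw [(i,True),(j,True)] k) = red (Hw [(j,True),(i,True)] k)"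
  by (auto simp: Fp_def Fm_def lf_def red_def rstep_def sub_id)

lemma rel_braid: "red (Hw [(i,True),(Suc i,True),(i,True)] k) = red (Hw [(Suc i,True),(i,True),(Suc i,True)] k)"
  by (auto simp: Fp_def Fm_def lf_def red_def rstep_def sub_id)

lemma act_rel: "braid_rel n v v' \<Longrightarrow> act v X = act v' X"
proof (induction rule: braid_rel.induct)
  case (cancel i b)
  then show ?case using rel_cancel[of i b] by (intro act_cong) auto
next
  case (comm i j)
  then show ?case using rel_comm[of i j] by (intro act_cong) auto
next
  case (braid i j)
  then show ?case using rel_braid[of i] rel_braid[of j] by (intro act_cong) auto
qed

lemma act_eq: "braid_eq n u v \<Longrightarrow> act u X = act v X"
proof (induction arbitrary: X rule: braid_eq.induct)
  case (ctx v v' u x)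
  then show ?case by (simp add: act_append act_rel)
qed auto

lemma set_rstep: "set (rstep X x) \<subseteq> set X \<union> {x}"
  by (auto simp: rstep_def dest: in_set_butlastD)

lemma set_foldl_rstep: "set (foldl rstep X w) \<subseteq> set X \<union> set w"
proof (induction w arbitrary: X)
  case (Cons x w)
  then show ?case using set_rstep[of X x] by force
qed simp

lemma set_red: "set (red w) \<subseteq> set w"
  using set_foldl_rstep[of "[]" w] by (simp add: red_def)

lemma fst_ninv[simp]: "fst (ninv x) = fst x" by (cases x) simp

lemma fst_finv: "fst ` set (finv u) = fst ` set u"
  by (simp add: finv_def image_image)

lemma fst_sub: "z \<in> set (sub f Y) \<Longrightarrow> \<exists>y\<in>set Y. fst z \<in> fst ` set (f (fst y))"
proof (induction Y)
  case (Cons y Y)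
  show ?case
  proof (cases "z \<in> set (sub f Y)")
    case True then show ?thesis using Cons.IH by auto
  next
    case False
    then have zin: "z \<in> set (if snd y then f (fst y) else finv (f (fst y)))" using Cons.prems by simp
    then have "fst z \<in> fst ` set (f (fst y))"
    proof (cases "snd y")
      case False
      then have "fst z \<in> fst ` set (finv (f (fst y)))" using zin by simp
      then show ?thesis by (simp only: fst_finv)
    qed (use zin in simp)
    then show ?thesis by auto
  qed
qed simp

lemma split_suffix: "\<exists>P Y. X = P @ Y \<and> (\<forall>y\<in>set Y. fst y \<noteq> a) \<and> (P = [] \<or> fst (last P) = a)"
proof (induction X rule: rev_induct)
  case Nil then show ?case by auto
next
  case (snoc x X)
  then obtain P Y where h: "X = P @ Y" "\<forall>y\<in>set Y. fst y \<noteq> a" "P = [] \<or> fst (last P) = a" by blast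
  show ?case
  proof (cases "fst x = a")
    case True then show ?thesis by (intro exI[of _ "X @ [x]"] exI[of _ "[]"]) auto
  next
    case False then show ?thesis using h by (intro exI[of _ P] exI[of _ "Y @ [x]"]) auto
  qed
qed

lemma larueA:
  assumes fa: "\<phi> a = [(a,True)]" and fk: "\<And>k. k \<noteq> a \<Longrightarrow> a \<notin> fst ` set (\<phi> k)"
    and inv: "\<And>Y. red (sub \<psi> (sub \<phi> Y)) = red Y"
  shows "reduced X \<Longrightarrow> X \<noteq> [] \<Longrightarrow> red (sub \<phi> X) \<noteq> [] \<and> (fst (last X) = a \<longrightarrow> last (red (sub \<phi> X)) = last X)
     \<and> (fst (last X) \<noteq> a \<longrightarrow> fst (last (red (sub \<phi> X))) \<noteq> a)"
proof (induction "length X" arbitrary: X rule: less_induct)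
  case less
  note IH = less.hyps
  show ?case
  proof (cases "fst (last X) = a")
    case True
    obtain X' x where X: "X = X' @ [x]" using less.prems(2) by (metis append_butlast_last_id)
    have x: "fst x = a" using True X by simp
    have sx: "sub \<phi> [x] = [x]" using x fa by (cases x) auto
    have "red (sub \<phi> X) = red (red (sub \<phi> X') @ [x])" using X sx by (simp add: red_left)
    then have e: "red (sub \<phi> X) = rstep (red (sub \<phi> X')) x" by (simp add: red_snoc)
    have rX': "reduced X'" and nx: "X' \<noteq> [] \<longrightarrow> x \<noteq> ninv (last X')"
      using less.prems(1) X by (auto simp: reduced_snoc)
    show ?thesis
    proof (cases "X' = []")
      case True then show ?thesis using e X by (simp add: rstep_def)
    next
      case False
      have IH': "red (sub \<phi> X') \<noteq> [] \<and> (fst (last X') = a \<longrightarrow> last (red (sub \<phi> X')) = last X')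
        \<and> (fst (last X') \<noteq> a \<longrightarrow> fst (last (red (sub \<phi> X'))) \<noteq> a)"
        using IH[of X'] X rX' False by simp
      have "last (red (sub \<phi> X')) \<noteq> ninv x"
      proof (cases "fst (last X') = a")
        case True then show ?thesis using IH' nx False by (auto simp: ninv_eq_iff)
      next
        case False then show ?thesis using IH' x by (cases x) auto
      qed
      then show ?thesis using e X IH' by (simp add: rstep_def)
    qed
  next
    case False
    obtain P Y where PY: "X = P @ Y" "\<forall>y\<in>set Y. fst y \<noteq> a" "P = [] \<or> fst (last P) = a"
      using split_suffix[of X a] by blast
    have Yne: "Y \<noteq> []" using PY False less.prems(2) by auto
    have rP: "reduced P" and rY: "reduced Y" using PY(1) less.prems(1) by (auto simp: reduced_append)
    define Z where "Z = red (sub \<phi> Y)"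
    have Zne: "Z \<noteq> []"
    proof
      assume "Z = []"
      then have "red (sub \<psi> (red (sub \<phi> Y))) = []" by (simp add: Z_def)
      then have "red Y = []" by (simp add: red_sub_red inv)
      then show False using rY Yne by (simp add: red_reduced)
    qed
    have Zfree: "\<forall>z\<in>set Z. fst z \<noteq> a"
    proof
      fix z assume "z \<in> set Z"
      then have "z \<in> set (sub \<phi> Y)" using set_red Z_def by blast
      then obtain y where "y \<in> set Y" "fst z \<in> fst ` set (\<phi> (fst y))" using fst_sub by blast
      then show "fst z \<noteq> a" using fk PY(2) by metis
    qed
    have e: "red (sub \<phi> X) = red (red (sub \<phi> P) @ Z)" using PY(1) by (simp add: Z_def red_both)
    show ?thesis
    proof (cases "P = []")
      case True
      have rZ: "red Z = Z" unfolding Z_def by (rule red_red)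
      have eZ: "red (sub \<phi> X) = Z" using e True rZ by simp
      have "fst (last Z) \<noteq> a" using Zfree Zne last_in_set by blast
      then show ?thesis using Zne False unfolding eZ by blast
    next
      case Pne: False
      have lP: "fst (last P) = a" using PY(3) Pne by simp
      have lenP: "length P < length X" using PY(1) Yne by simp
      have IH': "red (sub \<phi> P) \<noteq> [] \<and> last (red (sub \<phi> P)) = last P"
        using IH[OF lenP rP Pne] lP by simp
      have "hd Z \<noteq> ninv (last (red (sub \<phi> P)))"
      proof
        assume "hd Z = ninv (last (red (sub \<phi> P)))"
        then have "fst (hd Z) = a" using IH' lP by simp
        moreover have "hd Z \<in> set Z" using Zne by simp
        ultimately show False using Zfree by blast
      qed
      then have "reduced (red (sub \<phi> P) @ Z)" using Zne by (simp add: reduced_append Z_def)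
      then have "red (sub \<phi> X) = red (sub \<phi> P) @ Z" using e by (simp add: red_reduced)
      then show ?thesis using Zne Zfree False by simp
    qed
  qed
qed

definition sm :: "nat \<Rightarrow> fl \<Rightarrow> fl" where "sm i y = (if fst y = i then (Suc i, snd y) else y)"

lemma sub_Fp_free: "\<forall>y\<in>set Y. fst y \<noteq> Suc i \<Longrightarrow> sub (Fp i) Y = map (sm i) Y"
proof (induction Y)
  case (Cons y Y)
  obtain k s where y: "y = (k,s)" by (cases y)
  have "k \<noteq> Suc i" using Cons.prems y by auto
  then have "sub (Fp i) [y] = [sm i y]" using y by (cases s) (auto simp: Fp_def sm_def)
  then show ?case using Cons by simp
qed simp

lemma reduced_sm: "reduced Y \<Longrightarrow> \<forall>y\<in>set Y. fst y \<noteq> Suc i \<Longrightarrow> reduced (map (sm i) Y)"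
proof (induction Y rule: reduced.induct)
  case (3 x y r)
  obtain k s where x: "x = (k,s)" by (cases x)
  obtain k' s' where y: "y = (k',s')" by (cases y)
  show ?case using 3 x y by (auto simp: sm_def split: if_splits)
qed simp_all

lemma no_i_sm: "(i, s) \<notin> set (map (sm i) Y)"
  by (auto simp: sm_def split: if_splits)

lemma reduced_Cons: "reduced (x # Z) \<longleftrightarrow> reduced Z \<and> (Z \<noteq> [] \<longrightarrow> hd Z \<noteq> ninv x)"
  by (cases Z) auto

lemma snoc2_eq: "Q0 @ [u, v] = Q @ [u', v'] \<Longrightarrow> u = u' \<and> v = v'"
  using arg_cong[of "Q0 @ [u, v]" "Q @ [u', v']" rev] by simp

lemma len2: "length D = 2 \<Longrightarrow> \<exists>u v. D = [u,v]"
  by (auto simp: length_Suc_conv numeral_2_eq_2)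

lemma tail2: "A @ Z = Q @ [y, z] \<Longrightarrow> y \<notin> set Z \<Longrightarrow> length Z \<le> 1"
proof (rule ccontr)
  assume e: "A @ Z = Q @ [y, z]" and y: "y \<notin> set Z" and l: "\<not> length Z \<le> 1"
  define D where "D = drop (length Z - 2) Z"
  have "length D = 2" using l by (simp add: D_def)
  then obtain u v where D: "D = [u,v]" using len2 by blast
  have Z: "Z = take (length Z - 2) Z @ [u,v]" using D D_def by (metis append_take_drop_id)
  have "(A @ take (length Z - 2) Z) @ [u,v] = Q @ [y, z]" using e Z by (metis append_assoc)
  from snoc2_eq[OF this] have "u = y" by simp
  moreover have "u \<in> set Z" using Z by (metis in_set_conv_decomp)
  ultimately show False using y by simp
qed

lemma larueB:
  "reduced X \<Longrightarrow> X \<noteq> [] \<Longrightarrow> fst (last X) = Suc i \<Longrightarrow>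
    \<exists>Q. red (sub (Fp i) X) = Q @ [(i, snd (last X)), (Suc i, False)]"
proof (induction "length X" arbitrary: X rule: less_induct)
  case less
  note IH = less.hyps
  obtain X' x where X: "X = X' @ [x]" using less.prems(2) by (metis append_butlast_last_id)
  define e where "e = snd x"
  have x: "x = (Suc i, e)" using X less.prems(3) e_def by (cases x) auto
  have rX': "reduced X'" and nx: "X' \<noteq> [] \<longrightarrow> x \<noteq> ninv (last X')"
    using less.prems(1) X by (auto simp: reduced_snoc)
  have sx: "sub (Fp i) [x] = [(Suc i,True),(i,e),(Suc i,False)]" using x by (cases e) (auto simp: Fp_def)
  define R' where "R' = red (sub (Fp i) X')"
  have rR': "reduced R'" by (simp add: R'_def)
  have eX: "red (sub (Fp i) X) = red (R' @ [(Suc i,True),(i,e),(Suc i,False)])"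
    using X sx by (simp add: R'_def red_left)
  have C: "\<not> (\<exists>Q. R' = Q @ [(i, \<not>e), (Suc i, False)])"
  proof
    assume "\<exists>Q. R' = Q @ [(i, \<not>e), (Suc i, False)]"
    then obtain Q where Q: "R' = Q @ [(i, \<not>e), (Suc i, False)]" by blast
    obtain P Y where PY: "X' = P @ Y" "\<forall>y\<in>set Y. fst y \<noteq> Suc i" "P = [] \<or> fst (last P) = Suc i"
      using split_suffix[of X' "Suc i"] by blast
    have rP: "reduced P" and rY: "reduced Y" using PY(1) rX' by (auto simp: reduced_append)
    show False
    proof (cases "Y = []")
      case True
      show False
      proof (cases "P = []")
        case True then show False using Q PY(1) \<open>Y = []\<close> by (simp add: R'_def)
      next
        case False
        have lP: "fst (last P) = Suc i" using PY(3) False by simp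
        have "last P \<noteq> (Suc i, \<not> e)" using nx x PY(1) \<open>Y = []\<close> False by auto
        then have sP: "snd (last P) = e" using lP by (cases "last P") auto
        have "length P < length X" using X PY(1) \<open>Y = []\<close> by simp
        then obtain Q0 where "red (sub (Fp i) P) = Q0 @ [(i, e), (Suc i, False)]"
          using IH[of P] rP False lP sP by auto
        then show False using Q PY(1) \<open>Y = []\<close> snoc2_eq[of Q0 "(i,e)"] by (simp add: R'_def)
      qed
    next
      case Yne: False
      define Z where "Z = map (sm i) Y"
      have sY: "sub (Fp i) Y = Z" using sub_Fp_free[OF PY(2)] by (simp add: Z_def)
      have rZ: "reduced Z" using reduced_sm[OF rY PY(2)] by (simp add: Z_def)
      have Zne: "Z \<noteq> []" using Yne by (simp add: Z_def)
      have noi: "\<And>s. (i, s) \<notin> set Z" unfolding Z_def by (rule no_i_sm)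
      define R1 where "R1 = red (sub (Fp i) P)"
      have eR': "R' = red (R1 @ Z)" using PY(1) sY by (simp add: R'_def R1_def red_left)
      show False
      proof (cases "P = []")
        case True
        then have "R' = Z" using eR' rZ by (simp add: R1_def red_reduced)
        then have "Z = Q @ [(i, \<not>e), (Suc i, False)]" using Q by simp
        then have "(i, \<not>e) \<in> set Z" by simp
        then show False using noi by blast
      next
        case Pne: False
        have lP: "fst (last P) = Suc i" using PY(3) Pne by simp
        have "length P < length X" using X PY(1) by simp
        then obtain Q1 where Q1: "R1 = Q1 @ [(i, snd (last P)), (Suc i, False)]"
          using IH[of P] rP Pne lP by (auto simp: R1_def)
        define g where "g = snd (last P)"
        have rR1: "reduced R1" by (simp add: R1_def)
        then have rQ1: "reduced (Q1 @ [(i,g)])" using Q1 unfolding g_def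
          by (metis append.assoc append_Cons append_Nil reduced_append)
        show False
        proof (cases "hd Z = (Suc i, True)")
          case True
          then obtain Z' where Z': "Z = (Suc i, True) # Z'" using Zne by (cases Z) auto
          have "R' = red ((Q1 @ [(i,g)]) @ (Suc i, False) # ninv (Suc i, False) # Z')"
            using eR' Q1 Z' by (simp add: g_def)
          also have "\<dots> = red ((Q1 @ [(i,g)]) @ Z')" by (rule red_cancel)
          finally have eR2: "R' = red ((Q1 @ [(i,g)]) @ Z')" .
          have rZ': "reduced Z'" using rZ Z' by (metis append_Cons append_Nil reduced_append)
          have "Z' \<noteq> [] \<longrightarrow> hd Z' \<noteq> ninv (i,g)"
            using noi Z' by (metis hd_in_set list.set_intros(2) ninv.simps)
          then have "reduced ((Q1 @ [(i,g)]) @ Z')" using rQ1 rZ' by (simp add: reduced_append reduced_Cons)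
          then have eR3: "R' = Q1 @ (i,g) # Z'" using eR2 by (simp add: red_reduced)
          have ni: "(i, \<not>e) \<notin> set Z'" using noi Z' by auto
          have "(Q1 @ [(i,g)]) @ Z' = Q @ [(i,\<not>e),(Suc i,False)]" using eR3 Q by simp
          then have "length Z' \<le> 1" using ni by (rule tail2)
          then consider "Z' = []" | z where "Z' = [z]"
            by (metis One_nat_def le_Suc_eq le_zero_eq length_0_conv length_Suc_conv)
          then show False
          proof cases
            case 1 then show False using eR3 Q by simp
          next
            case (2 z)
            then have "z = (Suc i, False)" using eR3 Q snoc2_eq[of Q1 "(i,g)" z Q] by simp
            then show False using rZ Z' 2 by simp
          qed
        next
          case False
          then have "reduced (R1 @ Z)" using rR1 rZ Zne Q1 by (simp add: reduced_append reduced_Cons)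
          then have eR3: "R' = R1 @ Z" using eR' by (simp add: red_reduced)
          have "R1 @ Z = Q @ [(i,\<not>e),(Suc i,False)]" using eR3 Q by simp
          then have "length Z \<le> 1" using noi by (rule tail2)
          then obtain z where "Z = [z]" using Zne
            by (metis One_nat_def le_Suc_eq le_zero_eq length_0_conv length_Suc_conv)
          then have "(Q1 @ [(i, snd (last P))]) @ [(Suc i,False), z] = Q @ [(i,\<not>e),(Suc i,False)]"
            using eR3 Q Q1 by simp
          from snoc2_eq[OF this] show False by simp
        qed
      qed
    qed
  qed
  show ?case
  proof (cases "R' = []")
    case True
    have "reduced [(Suc i,True),(i,e),(Suc i,False)]" by simp
    then show ?thesis using eX True x X by (intro exI[of _ "[(Suc i,True)]"]) (simp add: red_reduced)
  next
    case R'ne: False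
    show ?thesis
    proof (cases "last R' = (Suc i, False)")
      case True
      then obtain R'' where R'': "R' = R'' @ [(Suc i, False)]" using R'ne by (metis append_butlast_last_id)
      have "red (sub (Fp i) X) = red (R'' @ (Suc i, False) # ninv (Suc i, False) # [(i,e),(Suc i,False)])"
        using eX R'' by simp
      also have "\<dots> = red (R'' @ [(i,e),(Suc i,False)])" by (rule red_cancel)
      also have "\<dots> = R'' @ [(i,e),(Suc i,False)]"
      proof -
        have rR'': "reduced R''" using rR' R'' by (simp add: reduced_snoc)
        have "R'' \<noteq> [] \<longrightarrow> last R'' \<noteq> (i, \<not> e)"
          using C R'' by (metis append_butlast_last_id append_Cons append_Nil append_assoc)
        then have "reduced (R'' @ [(i,e),(Suc i,False)])" using rR''
          by (simp add: reduced_append) (metis ninv_ninv ninv.simps)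
        then show ?thesis by (simp add: red_reduced)
      qed
      finally show ?thesis using x X by auto
    next
      case False
      have "reduced (R' @ [(Suc i,True),(i,e),(Suc i,False)])" using rR' R'ne False
        by (simp add: reduced_append) (metis ninv_ninv ninv.simps)
      then show ?thesis using eX x X by (intro exI[of _ "R' @ [(Suc i,True)]"]) (simp add: red_reduced)
    qed
  qed
qed

lemma inv_lf: "red (sub (lf (j, \<not>s)) (sub (lf (j,s)) Y)) = red Y"
proof -
  have "act [(j,s),(j,\<not>s)] Y = act [] Y" by (rule act_cong) (rule rel_cancel)
  moreover have "sub (lf (j,\<not>s)) (sub (lf (j,s)) Y) = sub (Hw [(j,s),(j,\<not>s)]) Y"
    by (simp add: sub_sub sub_id)
  ultimately show ?thesis by (simp add: act_H sub_id)
qed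

definition WW :: "nat \<Rightarrow> fl list \<Rightarrow> bool" where
  "WW i X \<longleftrightarrow> reduced X \<and> X \<noteq> [] \<and> last X = (Suc i, False)"

lemma stepW: "WW i X \<Longrightarrow> fst l < i \<or> l = (i,True) \<Longrightarrow> WW i (red (sub (lf l) X))"
proof -
  assume W: "WW i X" and l: "fst l < i \<or> l = (i,True)"
  show ?thesis
  proof (cases "l = (i,True)")
    case True
    have "fst (last X) = Suc i" using W by (simp add: WW_def)
    then obtain Q where Q: "red (sub (Fp i) X) = Q @ [(i, snd (last X)), (Suc i, False)]"
      using larueB[of X i] W by (auto simp: WW_def)
    have "reduced (red (sub (Fp i) X))" by simp
    then show ?thesis using True Q unfolding WW_def lf_def by simp
  next
    case False
    obtain j s where js: "l = (j,s)" by (cases l)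
    have j: "j < i" using False l js by auto
    have fa: "lf (j,s) (Suc i) = [(Suc i,True)]" using j by (auto simp: lf_def Fp_def Fm_def)
    have fk: "\<And>k. k \<noteq> Suc i \<Longrightarrow> Suc i \<notin> fst ` set (lf (j,s) k)" using j by (auto simp: lf_def Fp_def Fm_def)
    have "red (sub (lf (j,s)) X) \<noteq> [] \<and> (fst (last X) = Suc i \<longrightarrow> last (red (sub (lf (j,s)) X)) = last X)"
      using larueA[of "lf (j,s)" "Suc i" "lf (j,\<not>s)" X, OF fa fk inv_lf] W by (auto simp: WW_def)
    then show ?thesis using W js by (auto simp: WW_def)
  qed
qed

lemma act_fix: "\<forall>l\<in>set a0. fst l < i \<Longrightarrow> act a0 [(Suc i,True)] = [(Suc i,True)]"
proof (induction a0)
  case (Cons l a0)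
  have "lf l (Suc i) = [(Suc i,True)]" using Cons.prems by (auto simp: lf_def Fp_def Fm_def)
  then have "red (sub (lf l) [(Suc i,True)]) = [(Suc i,True)]" by (simp add: red_def rstep_def)
  then show ?case using Cons by (simp add: act_Cons)
qed (simp add: red_def rstep_def)

lemma act_W: "WW i X \<Longrightarrow> \<forall>l\<in>set r. fst l < i \<or> l = (i,True) \<Longrightarrow> WW i (act r X)"
proof (induction r arbitrary: X)
  case Nil then show ?case by (simp add: WW_def red_reduced)
next
  case (Cons l r)
  have "WW i (red (sub (lf l) X))" using Cons.prems by (intro stepW) auto
  then show ?case using Cons by (simp add: act_Cons)
qed

lemma propA: "i_positive i w \<Longrightarrow> braid_eq n [] w \<Longrightarrow> False"
proof -
  assume ip: "i_positive i w" and be: "braid_eq n [] w"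
  have iT: "(i,True) \<in> set w" and iF: "(i,False) \<notin> set w" and le: "\<forall>l\<in>set w. fst l \<le> i"
    using ip by (auto simp: i_positive_def)
  obtain a0 r where w: "w = a0 @ (i,True) # r" and na: "(i,True) \<notin> set a0"
    using split_list_first[OF iT] by blast
  have a0: "\<forall>l\<in>set a0. fst l < i"
  proof
    fix l assume "l \<in> set a0"
    then have "fst l \<le> i" "l \<noteq> (i,True)" "l \<noteq> (i,False)" using le w na iF by auto
    then show "fst l < i" by (cases l) (auto simp: le_less)
  qed
  have r: "\<forall>l\<in>set r. fst l < i \<or> l = (i,True)"
  proof
    fix l assume "l \<in> set r"
    then have "fst l \<le> i" "l \<noteq> (i,False)" using le w iF by auto
    then show "fst l < i \<or> l = (i,True)" by (cases l) (auto simp: le_less)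
  qed
  have "act [(i,True)] [(Suc i,True)] = [(Suc i,True),(i,True),(Suc i,False)]"
    by (simp add: act_Cons lf_def Fp_def red_def rstep_def)
  then have "WW i (act ((i,True) # r) (act a0 [(Suc i,True)]))"
    using act_fix[OF a0] act_W[OF _ r] by (simp add: act_Cons WW_def lf_def Fp_def red_def rstep_def)
  then have "WW i (act w [(Suc i,True)])" using w by (simp add: act_append)
  moreover have "act w [(Suc i,True)] = act [] [(Suc i,True)]" using act_eq[OF be] by simp
  ultimately show False by (simp add: WW_def red_def rstep_def)
qed



lemma gens_append[simp]: "gens n (u @ v) \<longleftrightarrow> gens n u \<and> gens n v"
  by (auto simp: gens_def)
lemma gens_Cons[simp]: "gens n (x # v) \<longleftrightarrow> 1 \<le> fst x \<and> fst x < n \<and> gens n v"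
  by (cases x) (auto simp: gens_def)
lemma gens_Nil[simp]: "gens n []" by (simp add: gens_def)

lemma rel_gens: "braid_rel n v v' \<Longrightarrow> gens n v \<and> gens n v'"
  by (induction rule: braid_rel.induct) auto

lemma be_gens: "braid_eq n u v \<Longrightarrow> gens n u \<and> gens n v"
  by (induction rule: braid_eq.induct) (auto dest: rel_gens)

lemma rel_mono: "braid_rel n v v' \<Longrightarrow> n \<le> m \<Longrightarrow> braid_rel m v v'"
  by (induction rule: braid_rel.induct) (auto intro: braid_rel.intros)

lemma gens_mono: "gens n u \<Longrightarrow> n \<le> m \<Longrightarrow> gens m u"
  by (auto simp: gens_def)

lemma be_mono: "braid_eq n u v \<Longrightarrow> n \<le> m \<Longrightarrow> braid_eq m u v"
  by (induction rule: braid_eq.induct)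
     (auto intro: braid_eq.intros rel_mono gens_mono)

lemma be_appL: "braid_eq n u u' \<Longrightarrow> gens n x \<Longrightarrow> braid_eq n (x @ u) (x @ u')"
proof (induction rule: braid_eq.induct)
  case (ctx v v' u y)
  then show ?case using braid_eq.ctx[of n v v' "x @ u" y] by simp
qed (auto intro: braid_eq.intros)

lemma be_appR: "braid_eq n u u' \<Longrightarrow> gens n x \<Longrightarrow> braid_eq n (u @ x) (u' @ x)"
proof (induction rule: braid_eq.induct)
  case (ctx v v' u y)
  then show ?case using braid_eq.ctx[of n v v' u "y @ x"] by simp
qed (auto intro: braid_eq.intros)

lemma be_app: "braid_eq n a b \<Longrightarrow> braid_eq n c d \<Longrightarrow> braid_eq n (a @ c) (b @ d)"
  by (meson be_appL be_appR be_gens braid_eq.trans)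

lemma be_mid: "braid_eq n m m' \<Longrightarrow> gens n x \<Longrightarrow> gens n y \<Longrightarrow> braid_eq n (x @ m @ y) (x @ m' @ y)"
  by (simp add: be_appL be_appR)

lemma inv_word_simps[simp]: "inv_word [] = []" "inv_word (x # u) = inv_word u @ [(fst x, \<not> snd x)]"
  "inv_word (u @ v) = inv_word v @ inv_word u" "inv_word (inv_word u) = u"
  by (auto simp: inv_word_def split: prod.split) (induction u, auto split: prod.split)

lemma gens_inv[simp]: "gens n (inv_word u) \<longleftrightarrow> gens n u"
  by (induction u) auto

lemma be_cancel2: "1 \<le> i \<Longrightarrow> i < n \<Longrightarrow> braid_eq n [(i,b),(i,\<not>b)] []"
  using braid_eq.ctx[OF braid_rel.cancel[of i n b], of "[]" "[]"] by simp

lemma be_cancelT: "1 \<le> i \<Longrightarrow> i < n \<Longrightarrow> braid_eq n [(i,True),(i,False)] []"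
  using be_cancel2[of i n True] by simp
lemma be_cancelF: "1 \<le> i \<Longrightarrow> i < n \<Longrightarrow> braid_eq n [(i,False),(i,True)] []"
  using be_cancel2[of i n False] by simp

lemma be_inv: "gens n u \<Longrightarrow> braid_eq n (u @ inv_word u) []"
proof (induction u)
  case Nil then show ?case by (auto intro: braid_eq.refl)
next
  case (Cons x u)
  obtain i b where x: "x = (i,b)" by (cases x)
  have "braid_eq n ([x] @ (u @ inv_word u) @ [(i, \<not>b)]) ([x] @ [] @ [(i, \<not>b)])"
    using Cons x by (intro be_mid) auto
  moreover have "braid_eq n [(i,b),(i,\<not>b)] []" using Cons x by (intro be_cancel2) auto
  ultimately show ?case using x by (auto intro: braid_eq.trans)
qed

lemma be_inv': "gens n u \<Longrightarrow> braid_eq n (inv_word u @ u) []"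
  using be_inv[of n "inv_word u"] by simp

definition hl :: "letter \<Rightarrow> letter" where "hl = (\<lambda>(i, b). (if i = 3 then 1 else i, b))"

lemma h_word_simps[simp]: "h_word [] = []" "h_word (x # u) = hl x # h_word u" "h_word (u @ v) = h_word u @ h_word v"
  by (auto simp: h_word_def hl_def)

lemma h_gens: "gens 4 u \<Longrightarrow> gens 3 (h_word u)"
  by (induction u) (auto simp: hl_def split: prod.split)

lemma h_rel: "braid_rel 4 v v' \<Longrightarrow> braid_eq 3 (h_word v) (h_word v')"
proof (induction rule: braid_rel.induct)
  case (cancel i b)
  then show ?case using be_cancel2[of "if i = 3 then 1 else i" 3 b] by (auto simp: hl_def)
next
  case (comm i j)
  then have "h_word [(i,True),(j,True)] = h_word [(j,True),(i,True)] \<and> gens 3 (h_word [(i,True),(j,True)])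
     \<or> braid_rel 3 (h_word [(i,True),(j,True)]) (h_word [(j,True),(i,True)])"
    by (auto simp: hl_def intro: braid_rel.intros)
  then show ?case
    by (metis braid_eq.ctx braid_eq.refl append.left_neutral append_Nil2 gens_Nil)
next
  case (braid i j)
  then have "braid_rel 3 (h_word [(i,True),(j,True),(i,True)]) (h_word [(j,True),(i,True),(j,True)])"
    by (auto simp: hl_def intro: braid_rel.intros)
  then show ?case using braid_eq.ctx[of 3 _ _ "[]" "[]"] by simp
qed

lemma h_eq: "braid_eq 4 u v \<Longrightarrow> braid_eq 3 (h_word u) (h_word v)"
proof (induction rule: braid_eq.induct)
  case (refl w) then show ?case by (simp add: h_gens braid_eq.refl)
next
  case (ctx v v' u x)
  then show ?case by (simp add: be_mid h_rel h_gens)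
qed (auto intro: braid_eq.intros)



declare braid_eq.trans[trans]

lemma key3: "braid_eq 4 [(3,False),(2,True),(3,True)] [(2,True),(3,True),(2,False)]"
proof -
  have s1: "braid_eq 4 ([(3,False),(2,True),(3,True)] @ [(2,True),(2,False)] @ []) ([(3,False),(2,True),(3,True)] @ [] @ [])"
    by (intro be_mid be_cancelT) auto
  have s2: "braid_eq 4 ([(3,False)] @ [(2,True),(3,True),(2,True)] @ [(2,False)]) ([(3,False)] @ [(3,True),(2,True),(3,True)] @ [(2,False)])"
    by (intro braid_eq.ctx braid_rel.braid) auto
  have s3: "braid_eq 4 ([] @ [(3,False),(3,True)] @ [(2,True),(3,True),(2,False)]) ([] @ [] @ [(2,True),(3,True),(2,False)])"
    by (intro be_mid be_cancelF) auto
  have "braid_eq 4 [(3,False),(2,True),(3,True)] [(3,False),(2,True),(3,True),(2,True),(2,False)]"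
    using braid_eq.sym[OF s1] by simp
  also have "braid_eq 4 [(3,False),(2,True),(3,True),(2,True),(2,False)] [(3,False),(3,True),(2,True),(3,True),(2,False)]"
    using s2 by simp
  also have "braid_eq 4 [(3,False),(3,True),(2,True),(3,True),(2,False)] [(2,True),(3,True),(2,False)]"
    using s3 by simp
  finally show ?thesis .
qed

theorem proposition3p7:
  shows "densely_ordered 4 ker_h"
  unfolding densely_ordered_def
proof
  assume "\<exists>p\<in>ker_h. dh_less 4 [] p \<and> (\<forall>q\<in>ker_h. dh_less 4 [] q \<longrightarrow> dh_le 4 p q)"
  then obtain p where pk: "p \<in> ker_h" and ppos: "dh_less 4 [] p"
    and pmin: "\<And>q. q \<in> ker_h \<Longrightarrow> dh_less 4 [] q \<Longrightarrow> dh_le 4 p q" by blast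
  have gp: "gens 4 p" and hp: "braid_eq 3 (h_word p) []" using pk by (auto simp: ker_h_def)
  obtain i w' where pw: "braid_eq 4 p w'" and ipw: "i_positive i w'"
    using ppos by (auto simp: dh_less_def dehornoy_pos_def)
  have gw': "gens 4 w'" using be_gens[OF pw] by simp
  have lw: "\<forall>l\<in>set w'. 1 \<le> fst l \<and> fst l \<le> i" and iT: "(i,True) \<in> set w'" and iF: "(i,False) \<notin> set w'"
    using ipw by (auto simp: i_positive_def)
  have i3: "i \<le> 3" using gw' iT by (auto simp: gens_def)
  have i3': "i = 3"
  proof (rule ccontr)
    assume "i \<noteq> 3"
    then have "\<forall>l\<in>set w'. fst l \<noteq> 3" using lw i3 by fastforce
    then have hw: "h_word w' = w'" by (induction w') (auto simp: hl_def split: prod.split)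
    have "braid_eq 3 (h_word p) (h_word w')" by (rule h_eq[OF pw])
    then have "braid_eq 3 [] (h_word w')" by (rule braid_eq.trans[OF braid_eq.sym[OF hp]])
    then have "braid_eq 3 [] w'" using hw by simp
    then show False using propA[OF ipw] by blast
  qed
  obtain a0 w where w': "w' = a0 @ (3,True) # w" and na: "(3,True) \<notin> set a0"
    using split_list_first[of "(3,True)" w'] iT i3' by blast
  have a0l: "\<forall>l\<in>set a0. 1 \<le> fst l \<and> fst l \<le> 2"
  proof
    fix l assume "l \<in> set a0"
    then have "1 \<le> fst l" "fst l \<le> 3" "l \<noteq> (3,True)" "l \<noteq> (3,False)" using lw w' na iF i3' by auto
    then show "1 \<le> fst l \<and> fst l \<le> 2" by (cases l) auto
  qed
  have ga0: "gens 4 a0" and gw: "gens 4 w" using gw' w' by auto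
  define q where "q = a0 @ [(2,False),(3,True),(1,False),(2,True)] @ inv_word a0"
  have gq: "gens 4 q" using ga0 by (simp add: q_def)
  have ha0: "h_word a0 = a0" using a0l by (induction a0) (auto simp: hl_def split: prod.split)
  have hinv: "h_word (inv_word a0) = inv_word a0" using a0l by (induction a0) (auto simp: hl_def split: prod.split)
  have ga03: "gens 3 a0" using a0l by (auto simp: gens_def)
  have qker: "q \<in> ker_h"
  proof -
    have "h_word q = a0 @ [(2,False)] @ ([(1,True),(1,False)] @ [(2,True)] @ inv_word a0)"
      by (simp add: q_def ha0 hinv hl_def)
    also have "braid_eq 3 (a0 @ [(2,False)] @ ([(1,True),(1,False)] @ [(2,True)] @ inv_word a0))
          (a0 @ [(2,False)] @ ([] @ [(2,True)] @ inv_word a0))"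
      using ga03 by (intro be_appL be_mid be_cancelT) auto
    also have "a0 @ [(2,False)] @ ([] @ [(2,True)] @ inv_word a0) = a0 @ [(2,False),(2,True)] @ inv_word a0"
      by simp
    also have "braid_eq 3 (a0 @ [(2,False),(2,True)] @ inv_word a0) (a0 @ [] @ inv_word a0)"
      using ga03 by (intro be_mid be_cancelF) auto
    also have "a0 @ [] @ inv_word a0 = a0 @ inv_word a0" by simp
    also have "braid_eq 3 (a0 @ inv_word a0) []" using ga03 by (rule be_inv)
    finally show ?thesis using gq unfolding ker_h_def by simp
  qed
  have qpos: "dh_less 4 [] q"
  proof -
    have "i_positive 3 q" using a0l
      by (auto simp: i_positive_def q_def inv_word_def)
    then show ?thesis using gq by (auto simp: dh_less_def dehornoy_pos_def intro: braid_eq.refl)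
  qed
  define v where "v = a0 @ [(2,False),(1,True),(2,True),(3,True),(2,False)] @ w"
  have iv: "i_positive 3 v" using ipw w' i3' a0l by (auto simp: i_positive_def v_def)
  have gv: "gens 4 v" using ga0 gw by (simp add: v_def)
  have qp: "braid_eq 4 (inv_word q @ p) v"
  proof -
    have iq: "inv_word q = a0 @ [(2,False),(1,True),(3,False),(2,True)] @ inv_word a0" by (simp add: q_def)
    have e1: "braid_eq 4 (inv_word q @ p) (inv_word q @ w')" using pw gq by (intro be_appL) auto
    have e2: "braid_eq 4 ((a0 @ [(2,False),(1,True),(3,False),(2,True)]) @ (inv_word a0 @ a0) @ ((3,True) # w))
       ((a0 @ [(2,False),(1,True),(3,False),(2,True)]) @ [] @ ((3,True) # w))"
      using ga0 gw by (intro be_mid be_inv') auto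
    have e3: "braid_eq 4 ((a0 @ [(2,False),(1,True)]) @ [(3,False),(2,True),(3,True)] @ w)
      ((a0 @ [(2,False),(1,True)]) @ [(2,True),(3,True),(2,False)] @ w)"
      using ga0 gw key3 by (intro be_mid) auto
    note e1
    also have "inv_word q @ w' = (a0 @ [(2,False),(1,True),(3,False),(2,True)]) @ (inv_word a0 @ a0) @ ((3,True) # w)"
      using iq w' by simp
    also note e2
    also have "(a0 @ [(2,False),(1,True),(3,False),(2,True)]) @ [] @ ((3,True) # w) = (a0 @ [(2,False),(1,True)]) @ [(3,False),(2,True),(3,True)] @ w"
      by simp
    also note e3
    also have "(a0 @ [(2,False),(1,True)]) @ [(2,True),(3,True),(2,False)] @ w = v" by (simp add: v_def)
    finally show ?thesis .
  qed
  have "dh_le 4 p q" using pmin qker qpos by blast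
  then show False unfolding dh_le_def
  proof
    assume "braid_eq 4 p q"
    then have "braid_eq 4 (inv_word q @ p) (inv_word q @ q)" using gq by (intro be_appL) auto
    also have "braid_eq 4 (inv_word q @ q) []" using gq by (rule be_inv')
    finally have X: "braid_eq 4 (inv_word q @ p) []" .
    have "braid_eq 4 [] v" by (rule braid_eq.trans[OF braid_eq.sym[OF X] qp])
    then show False using propA[OF iv] by blast
  next
    assume "dh_less 4 p q"
    then obtain j u where pq: "braid_eq 4 (inv_word p @ q) u" and iu: "i_positive j u"
      by (auto simp: dh_less_def dehornoy_pos_def)
    have gu: "gens 4 u" using be_gens[OF pq] by simp
    have j3: "j \<le> 3" using gu iu by (auto simp: gens_def i_positive_def)
    have Y: "braid_eq 4 ((inv_word p @ q) @ (inv_word q @ p)) (u @ v)" using pq qp by (rule be_app)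
    have "(inv_word p @ q) @ (inv_word q @ p) = inv_word p @ (q @ inv_word q) @ p" by simp
    also have "braid_eq 4 (inv_word p @ (q @ inv_word q) @ p) (inv_word p @ [] @ p)"
      using gp gq by (intro be_mid be_inv) auto
    also have "inv_word p @ [] @ p = inv_word p @ p" by simp
    also have "braid_eq 4 (inv_word p @ p) []" using gp by (rule be_inv')
    finally have X: "braid_eq 4 ((inv_word p @ q) @ (inv_word q @ p)) []" .
    have "braid_eq 4 [] (u @ v)" by (rule braid_eq.trans[OF braid_eq.sym[OF X] Y])
    moreover have "i_positive 3 (u @ v)"
    proof -
      have "\<forall>l\<in>set u. 1 \<le> fst l \<and> fst l \<le> 3" using iu j3 by (auto simp: i_positive_def)
      moreover have "(3,False) \<notin> set u" using iu j3
        by (auto simp: i_positive_def)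
      ultimately show ?thesis using iv by (auto simp: i_positive_def)
    qed
    ultimately show False using propA by blast
  qed
qed


end
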